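(* Let $\mathcal{G}\subset\mathcal{S}$ with harmonic analogue $\mathcal{G}_H^0$. Suppose $P,Q$ are integrable functions on $[0,1)$ such that $P(|z|)\le|f'(z)|\le Q(|z|)$ for all $z\in\mathbb{D}$ and all $f\in\mathcal{G}$. Then every $f\in\mathcal{G}_H^0$ satisfies $$\int_0^{|z|}P(\rho)\,d\rho\le|f(z)|\le\int_0^{|z|}Q(\rho)\,d\rho,\quad z\in\mathbb{D}.$$ In particular, provided the limit exists, the range of every $f\in\mathcal{G}_H^0$ contains the disk $\{w\in\mathbb{C}:|w|<\lim_{|z|\to1}\int_0^{|z|}P(\rho)\,d\rho\}$.
   Context: $\mathbb{D}$ is the open unit disk. $\mathcal{S}$ is the class of analytic univalent functions $f$ in $\mathbb{D}$ with $f(0)=0$, $f'(0)=1$. For $\mathcal{G}\subset\mathcal{S}$, its harmonic analogue $\mathcal{G}_H^0$ is the class of harmonic functions $f=h+\bar g$ ($h,g$ analytic in $\mathbb{D}$) such that $h+\epsilon g\in\mathcal{G}$ for every $\epsilon\in\mathbb{C}$ with $|\epsilon|=1$. *)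

theory Defs
  imports "HOL-Complex_Analysis.Complex_Analysis"
begin

text \<open>The class S of normalized analytic univalent functions on the unit disk.
  Functions are total on complex; only their values on the disk matter.\<close>
definition class_S :: "(complex \<Rightarrow> complex) set" where
  "class_S = {f. f holomorphic_on ball 0 1 \<and> inj_on f (ball 0 1) \<and> f 0 = 0 \<and> deriv f 0 = 1}"

definition harmonic_analogue :: "(complex \<Rightarrow> complex) set \<Rightarrow> (complex \<Rightarrow> complex) set" where
  "harmonic_analogue G = {f. \<exists>h g. h holomorphic_on ball 0 1 \<and> g holomorphic_on ball 0 1 \<and>
      (\<forall>z\<in>ball 0 1. f z = h z + cnj (g z)) \<and>
      (\<forall>\<epsilon>. norm \<epsilon> = 1 \<longrightarrow> (\<exists>F\<in>G. \<forall>z\<in>ball 0 1. F z = h z + \<epsilon> * g z))}"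

end

theory Submission
  imports Defs
begin

lemma hA_obtain:
  assumes "f \<in> harmonic_analogue G"
  obtains h g where "h holomorphic_on ball 0 1" "g holomorphic_on ball 0 1"
     "\<And>z. z\<in>ball 0 1 \<Longrightarrow> f z = h z + cnj (g z)"
     "\<And>\<epsilon>. norm \<epsilon> = 1 \<Longrightarrow> \<exists>F\<in>G. \<forall>z\<in>ball 0 1. F z = h z + \<epsilon> * g z"
  using assms unfolding harmonic_analogue_def by blast

lemma pointwise_member:
  assumes "f \<in> harmonic_analogue G" "z \<in> ball 0 1"
  shows "\<exists>F\<in>G. f z = F z"
proof -
  obtain h g where hg: "h holomorphic_on ball 0 1" "g holomorphic_on ball 0 1"
     "\<And>z. z\<in>ball 0 1 \<Longrightarrow> f z = h z + cnj (g z)"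
     "\<And>\<epsilon>. norm \<epsilon> = 1 \<Longrightarrow> \<exists>F\<in>G. \<forall>z\<in>ball 0 1. F z = h z + \<epsilon> * g z"
    using hA_obtain[OF assms(1)] by metis
  define \<epsilon> where "\<epsilon> = (if g z = 0 then 1 else cnj (g z) / g z)"
  have n: "norm \<epsilon> = 1" by (simp add: \<epsilon>_def norm_divide)
  have e: "\<epsilon> * g z = cnj (g z)" by (simp add: \<epsilon>_def)
  obtain F where F: "F \<in> G" "\<forall>z\<in>ball 0 1. F z = h z + \<epsilon> * g z" using hg(4)[OF n] by blast
  then have "F z = f z" using hg(3)[OF assms(2)] e assms(2) by simp
  with F(1) show ?thesis by metis
qed

lemma upper_analytic:
  assumes "F holomorphic_on ball 0 1" "F 0 = 0" "z \<in> ball 0 1"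
    "Q integrable_on {0..norm z}"
    "\<And>\<zeta>. \<zeta> \<in> ball 0 1 \<Longrightarrow> norm (deriv F \<zeta>) \<le> Q (norm \<zeta>)"
  shows "norm (F z) \<le> integral {0..norm z} Q"
proof (cases "z = 0")
  case True
  then show ?thesis using assms(2) by simp
next
  case False
  define r where "r = norm z"
  define u where "u = z / of_real r"
  have r: "0 < r" "r < 1" using False assms(3) by (auto simp: r_def)
  have nu: "norm u = 1" using False by (simp add: u_def r_def norm_divide)
  have zu: "of_real r * u = z" using False by (simp add: u_def r_def)
  have inb: "of_real \<rho> * u \<in> ball 0 1" if "\<rho> \<in> {0..r}" for \<rho>
    using that r nu by (auto simp: norm_mult)
  have der: "((\<lambda>\<rho>. F (of_real \<rho> * u)) has_vector_derivative (u * deriv F (of_real \<rho> * u))) (at \<rho> within {0..r})"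
    if "\<rho> \<in> {0..r}" for \<rho>
  proof -
    have d1: "((\<lambda>x::real. of_real x * u) has_vector_derivative u) (at \<rho> within {0..r})"
      by (simp add: has_vector_derivative_real_field mult.commute)
    have d2: "(F has_field_derivative deriv F (of_real \<rho> * u)) (at (of_real \<rho> * u))"
      using holomorphic_derivI[OF assms(1) open_ball inb[OF that]] .
    show ?thesis
      using field_vector_diff_chain_within[OF d1 has_field_derivative_at_within[OF d2]]
      by (simp add: o_def)
  qed
  have hi: "((\<lambda>\<rho>. u * deriv F (of_real \<rho> * u)) has_integral (F z - F 0)) {0..r}"
    using fundamental_theorem_of_calculus[of 0 r, OF _ der] r zu by simp
  have "norm (F z) = norm (integral {0..r} (\<lambda>\<rho>. u * deriv F (of_real \<rho> * u)))"
    using integral_unique[OF hi] assms(2) by (metis diff_zero)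
  also have "\<dots> \<le> integral {0..r} Q"
  proof (rule integral_norm_bound_integral)
    show "(\<lambda>\<rho>. u * deriv F (of_real \<rho> * u)) integrable_on {0..r}" using hi by blast
    show "Q integrable_on {0..r}" using assms(4) by (simp add: r_def)
    fix \<rho> assume "\<rho> \<in> {0..r}"
    then show "norm (u * deriv F (of_real \<rho> * u)) \<le> Q \<rho>"
      using assms(5)[OF inb] nu by (simp add: norm_mult)
  qed
  finally show ?thesis by (simp add: r_def)
qed

lemma inf_sphere_cont:
  fixes k :: "complex \<Rightarrow> real"
  assumes "continuous_on (cball 0 r) k"
  shows "continuous_on {0..r} (\<lambda>\<rho>. INF u\<in>sphere 0 1. k (of_real \<rho> * u))"
proof -
  define m where "m = (\<lambda>\<rho>. INF u\<in>sphere (0::complex) 1. k (of_real \<rho> * u))"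
  have uc: "uniformly_continuous_on (cball 0 r) k"
    using compact_uniformly_continuous[OF assms compact_cball] .
  have "bounded (k ` cball 0 r)"
    using compact_imp_bounded[OF compact_continuous_image[OF assms compact_cball]] .
  then obtain B where B: "\<And>x. x \<in> cball 0 r \<Longrightarrow> norm (k x) \<le> B"
    unfolding bounded_iff by blast
  have inc: "of_real \<rho> * u \<in> cball 0 r" if "\<rho> \<in> {0..r}" "u \<in> sphere 0 1" for \<rho> and u :: complex
    using that by (simp add: dist_0_norm norm_mult)
  have bdd: "bdd_below ((\<lambda>u. k (of_real \<rho> * u)) ` sphere 0 1)" if "\<rho> \<in> {0..r}" for \<rho>
  proof (rule bdd_belowI[of _ "-B"])
    fix y assume "y \<in> (\<lambda>u. k (of_real \<rho> * u)) ` sphere 0 1"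
    then obtain u where "u \<in> sphere 0 1" "y = k (of_real \<rho> * u)" by blast
    then show "-B \<le> y" using B[OF inc[OF that]] by (metis abs_le_iff minus_le_iff real_norm_def)
  qed
  have ne: "sphere (0::complex) 1 \<noteq> {}" by simp
  have one: "m \<rho>1 - e \<le> m \<rho>2"
    if r12: "\<rho>1 \<in> {0..r}" "\<rho>2 \<in> {0..r}"
    and cl: "\<And>u. u \<in> sphere 0 1 \<Longrightarrow> dist (k (of_real \<rho>1 * u)) (k (of_real \<rho>2 * u)) < e"
    for \<rho>1 \<rho>2 e
    unfolding m_def
  proof (rule cINF_greatest[OF ne])
    fix u :: complex assume u: "u \<in> sphere 0 1"
    have "(INF u\<in>sphere 0 1. k (of_real \<rho>1 * u)) \<le> k (of_real \<rho>1 * u)"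
      by (rule cINF_lower[OF bdd[OF r12(1)] u])
    moreover have "k (of_real \<rho>1 * u) - k (of_real \<rho>2 * u) < e"
      using cl[OF u] by (simp add: dist_real_def)
    ultimately show "(INF u\<in>sphere 0 1. k (of_real \<rho>1 * u)) - e \<le> k (of_real \<rho>2 * u)"
      by linarith
  qed
  have "uniformly_continuous_on {0..r} m"
    unfolding uniformly_continuous_on_def
  proof (intro allI impI)
    fix e :: real assume e: "e > 0"
    obtain \<delta> where \<delta>: "\<delta> > 0"
      "\<And>x x'. x \<in> cball 0 r \<Longrightarrow> x' \<in> cball 0 r \<Longrightarrow> dist x' x < \<delta> \<Longrightarrow> dist (k x') (k x) < e/2"
      using uc e unfolding uniformly_continuous_on_def by (meson half_gt_zero)
    show "\<exists>d>0. \<forall>x\<in>{0..r}. \<forall>x'\<in>{0..r}. dist x' x < d \<longrightarrow> dist (m x') (m x) < e"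
    proof (intro exI[of _ \<delta>] conjI ballI impI \<delta>(1))
      fix x x' assume xs: "x \<in> {0..r}" "x' \<in> {0..r}" and dx: "dist x' x < \<delta>"
      have dd: "dist (of_real x' * u) (of_real x * u) < \<delta>" if "u \<in> sphere 0 1" for u :: complex
      proof -
        have "dist (of_real x' * u) (of_real x * u) = norm (of_real (x' - x) * u)"
          by (simp add: dist_norm algebra_simps)
        also have "\<dots> = dist x' x" using that by (simp add: norm_mult dist_real_def del: of_real_diff)
        finally show ?thesis using dx by simp
      qed
      have a: "m x' - e/2 \<le> m x"
        by (rule one[OF xs(2) xs(1)]) (use \<delta>(2) inc xs dd in blast)
      have b: "m x - e/2 \<le> m x'"
        by (rule one[OF xs(1) xs(2)]) (use \<delta>(2) inc xs dd in \<open>metis dist_commute\<close>)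
      show "dist (m x') (m x) < e" using a b e by (simp add: dist_real_def abs_if)
    qed
  qed
  then show ?thesis unfolding m_def by (rule uniformly_continuous_imp_continuous)
qed

lemma ball_in_image:
  assumes hol: "F holomorphic_on ball 0 1" and inj: "inj_on F (ball 0 1)" and r: "0 < r" "r < 1"
    and F0: "F 0 = 0" and d: "\<And>\<zeta>. \<zeta> \<in> sphere 0 r \<Longrightarrow> d \<le> norm (F \<zeta>)"
  shows "ball 0 d \<subseteq> F ` ball 0 r"
proof
  fix w assume w: "w \<in> ball (0::complex) d"
  define U where "U = F ` ball 0 r"
  have sub: "ball 0 r \<subseteq> ball (0::complex) 1" "cball 0 r \<subseteq> ball (0::complex) 1" using r by auto
  have opU: "open U" unfolding U_def
    by (rule open_mapping_thm3[OF holomorphic_on_subset[OF hol sub(1)] open_ball inj_on_subset[OF inj sub(1)]])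
  have cont: "continuous_on (cball 0 r) F"
    using holomorphic_on_imp_continuous_on[OF holomorphic_on_subset[OF hol sub(2)]] .
  have clo: "closed (F ` cball 0 r)"
    by (rule compact_imp_closed[OF compact_continuous_image[OF cont compact_cball]])
  have clU: "closure U \<subseteq> F ` cball 0 r"
    by (rule closure_minimal) (use clo in \<open>auto simp: U_def\<close>)
  show "w \<in> F ` ball 0 r"
  proof (rule ccontr)
    assume nw: "w \<notin> F ` ball 0 r"
    have "0 < d" using w norm_ge_zero[of w] by (simp del: norm_ge_zero)
    then have "0 \<in> ball 0 d \<inter> U" using r F0 unfolding U_def by (auto intro!: image_eqI[of 0])
    then have "ball 0 d \<inter> frontier U \<noteq> {}"
      using connected_Int_frontier[OF connected_ball, of 0 d U] w nw unfolding U_def by blast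
    then obtain y where y: "y \<in> ball 0 d" "y \<in> frontier U" by blast
    then have "y \<in> closure U" "y \<notin> U" using opU by (auto simp: frontier_def interior_open)
    then obtain \<zeta> where z: "\<zeta> \<in> cball 0 r" "y = F \<zeta>" "\<zeta> \<notin> ball 0 r"
      using clU unfolding U_def by blast
    then have "\<zeta> \<in> sphere 0 r" by auto
    then have "d \<le> norm y" using d z by simp
    then show False using y(1) by simp
  qed
qed

lemma norm_path_deriv:
  fixes \<gamma> :: "real \<Rightarrow> complex"
  assumes "(\<gamma> has_vector_derivative v) (at t)" "\<gamma> t \<noteq> 0"
  shows "((\<lambda>t. norm (\<gamma> t)) has_real_derivative (inner v (sgn (\<gamma> t)))) (at t)"
proof -
  have "((\<lambda>x. norm x) \<circ> \<gamma> has_derivative (\<lambda>h. inner h (sgn (\<gamma> t))) \<circ> (\<lambda>h. h *\<^sub>R v)) (at t)"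
    using diff_chain_at[OF assms(1)[unfolded has_vector_derivative_def]
       has_derivative_norm[OF assms(2)]] .
  moreover have "(\<lambda>h. inner h (sgn (\<gamma> t))) \<circ> (\<lambda>h. h *\<^sub>R v) = (*) (inner v (sgn (\<gamma> t)))"
    by (auto simp: fun_eq_iff mult.commute)
  ultimately show ?thesis unfolding has_field_derivative_def by (simp add: o_def)
qed

lemma key_lower:
  assumes hol: "F holomorphic_on ball 0 1" and inj: "inj_on F (ball 0 1)" and F0: "F 0 = 0"
    and r: "0 < r" "r < 1" and z0: "z0 \<in> sphere 0 r"
    and bal: "ball 0 (norm (F z0)) \<subseteq> F ` ball 0 r"
    and mc: "continuous_on {0..r} m" and m0: "\<And>\<rho>. \<rho> \<in> {0..r} \<Longrightarrow> 0 \<le> m \<rho>"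
    and mF: "\<And>\<zeta>. norm \<zeta> \<le> r \<Longrightarrow> m (norm \<zeta>) \<le> norm (deriv F \<zeta>)"
  shows "integral {0..r} m \<le> norm (F z0)"
proof -
  define w0 where "w0 = F z0"
  define d where "d = norm w0"
  have z0b: "z0 \<in> ball 0 1" "z0 \<noteq> 0" using z0 r by auto
  have "w0 \<noteq> 0"
  proof
    assume "w0 = 0"
    then have "F z0 = F 0" using F0 by (simp add: w0_def)
    then show False using inj z0b by (auto dest: inj_onD)
  qed
  then have d0: "d > 0" by (simp add: d_def)
  obtain Gi where Gi: "Gi holomorphic_on (F ` ball 0 1)"
    "\<And>z. z \<in> ball 0 1 \<Longrightarrow> deriv F z * deriv Gi (F z) = 1"
    "\<And>z. z \<in> ball 0 1 \<Longrightarrow> Gi (F z) = z"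
    using holomorphic_has_inverse[OF hol open_ball inj] by blast
  have opF: "open (F ` ball 0 1)" by (rule open_mapping_thm3[OF hol open_ball inj])
  define \<gamma> where "\<gamma> = (\<lambda>t::real. Gi (of_real t * w0))"
  have pre: "\<exists>\<zeta>\<in>ball 0 1. F \<zeta> = of_real t * w0 \<and> \<gamma> t = \<zeta> \<and> norm \<zeta> \<le> r \<and> (t < 1 \<longrightarrow> norm \<zeta> < r)"
    if t: "t \<in> {0..1}" for t
  proof (cases "t = 1")
    case True
    then show ?thesis using z0 z0b Gi(3)[of z0] by (auto simp: w0_def \<gamma>_def)
  next
    case False
    then have "t < 1" using t by simp
    then have "of_real t * w0 \<in> ball 0 d" using t d0 by (simp add: norm_mult d_def)
    then obtain \<zeta> where "\<zeta> \<in> ball 0 r" "of_real t * w0 = F \<zeta>" using bal by (auto simp: d_def w0_def)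
    moreover have "\<zeta> \<in> ball 0 1" using calculation r by auto
    ultimately show ?thesis using Gi(3)[of \<zeta>] \<open>t < 1\<close> by (auto simp: \<gamma>_def)
  qed
  have inF: "of_real t * w0 \<in> F ` ball 0 1" if "t \<in> {0..1}" for t
    using pre[OF that] by (metis image_eqI)
  have \<gamma>0: "\<gamma> 0 = 0" using Gi(3)[of 0] F0 by (simp add: \<gamma>_def)
  have \<gamma>1: "\<gamma> 1 = z0" using Gi(3)[OF z0b(1)] by (simp add: \<gamma>_def w0_def)
  have \<gamma>r: "norm (\<gamma> t) \<in> {0..r}" if "t \<in> {0..1}" for t using pre[OF that] by auto
  have contG: "continuous_on (F ` ball 0 1) Gi" using holomorphic_on_imp_continuous_on[OF Gi(1)] .
  have cont\<gamma>: "continuous_on {0..1} \<gamma>" unfolding \<gamma>_def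
    by (rule continuous_on_compose2[OF contG]) (use inF in \<open>auto intro!: continuous_intros\<close>)
  define M where "M = (\<lambda>s. integral {0..s} m)"
  have Mder: "(M has_real_derivative m s) (at s within {0..r})" if "s \<in> {0..r}" for s
    unfolding M_def by (rule integral_has_real_derivative[OF mc that])
  have contM: "continuous_on {0..r} M"
    using Mder by (meson DERIV_continuous continuous_on_eq_continuous_within)
  define \<phi> where "\<phi> = (\<lambda>t. M (norm (\<gamma> t)) - d * t)"
  have cont\<phi>: "continuous_on {0..1} \<phi>" unfolding \<phi>_def
    by (intro continuous_intros continuous_on_compose2[OF contM, of _ "\<lambda>t. norm (\<gamma> t)"] cont\<gamma>)
       (use \<gamma>r in auto)
  have der: "\<exists>y. (\<phi> has_real_derivative y) (at t) \<and> y \<le> 0" if t: "0 < t" "t < 1" for t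
  proof -
    obtain \<zeta> where z: "\<zeta> \<in> ball 0 1" "F \<zeta> = of_real t * w0" "\<gamma> t = \<zeta>" "norm \<zeta> < r"
      using pre[of t] t by auto
    have "\<zeta> \<noteq> 0"
    proof
      assume "\<zeta> = 0" then have "of_real t * w0 = 0" using z F0 by simp
      then show False using t \<open>w0 \<noteq> 0\<close> by simp
    qed
    have dF: "deriv F \<zeta> * deriv Gi (F \<zeta>) = 1" using Gi(2)[OF z(1)] .
    then have dF0: "deriv F \<zeta> \<noteq> 0" by auto
    have dGi: "(Gi has_field_derivative deriv Gi (F \<zeta>)) (at (of_real t * w0))"
      using holomorphic_derivI[OF Gi(1) opF inF[of t]] t z(2) by simp
    have d1: "((\<lambda>x::real. of_real x * w0) has_vector_derivative w0) (at t)"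
      by (simp add: has_vector_derivative_real_field mult.commute)
    define v where "v = w0 * deriv Gi (F \<zeta>)"
    have dg: "(\<gamma> has_vector_derivative v) (at t)"
      using field_vector_diff_chain_at[OF d1 dGi] by (simp add: o_def \<gamma>_def v_def)
    have dn: "((\<lambda>t. norm (\<gamma> t)) has_real_derivative (inner v (sgn \<zeta>))) (at t)"
      using norm_path_deriv[OF dg] z(3) \<open>\<zeta> \<noteq> 0\<close> by simp
    have ns: "norm \<zeta> \<in> {0..r}" "0 < norm \<zeta>" "norm \<zeta> < r" using z \<open>\<zeta> \<noteq> 0\<close> by auto
    have dM: "(M has_real_derivative m (norm \<zeta>)) (at (norm \<zeta>))"
      using Mder[OF ns(1)] at_within_Icc_at[OF ns(2,3)] by simp
    have dphi: "(\<phi> has_real_derivative (m (norm \<zeta>) * inner v (sgn \<zeta>) - d)) (at t)"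
      unfolding \<phi>_def
      using DERIV_chain2[OF dM[unfolded z(3)[symmetric]] dn] z(3)
      by (auto intro!: derivative_eq_intros)
    have "inner v (sgn \<zeta>) \<le> norm v * norm (sgn \<zeta>)" by (rule norm_cauchy_schwarz)
    also have "\<dots> = norm v" using \<open>\<zeta> \<noteq> 0\<close> by (simp add: norm_sgn)
    finally have iv: "inner v (sgn \<zeta>) \<le> norm v" .
    have nv: "norm v * norm (deriv F \<zeta>) = d"
    proof -
      have "norm v * norm (deriv F \<zeta>) = norm w0 * norm (deriv F \<zeta> * deriv Gi (F \<zeta>))"
        by (simp add: v_def norm_mult)
      then show ?thesis using dF by (simp add: d_def)
    qed
    have m0': "0 \<le> m (norm \<zeta>)" using m0 ns(1) .
    have "m (norm \<zeta>) * inner v (sgn \<zeta>) \<le> m (norm \<zeta>) * norm v"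
      by (rule mult_left_mono[OF iv m0'])
    also have "\<dots> \<le> norm (deriv F \<zeta>) * norm v"
      using mF[of \<zeta>] ns by (intro mult_right_mono) auto
    also have "\<dots> = d" using nv by (simp add: mult.commute)
    finally show ?thesis using dphi by (intro exI[of _ "m (norm \<zeta>) * inner v (sgn \<zeta>) - d"]) auto
  qed
  have "\<phi> 1 \<le> \<phi> 0"
    by (rule DERIV_nonpos_imp_decreasing_open[of 0 1 \<phi>]) (use der cont\<phi> in auto)
  moreover have "\<phi> 0 = 0" using \<gamma>0 by (simp add: \<phi>_def M_def)
  moreover have "\<phi> 1 = integral {0..r} m - d" using \<gamma>1 z0 by (simp add: \<phi>_def M_def)
  ultimately show ?thesis by (simp add: d_def w0_def)
qed

lemma lower_analytic:
  assumes "F \<in> class_S" "z \<in> ball 0 1"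
    "P integrable_on {0..norm z}"
    "\<And>\<zeta>. \<zeta> \<in> ball 0 1 \<Longrightarrow> P (norm \<zeta>) \<le> norm (deriv F \<zeta>)"
  shows "integral {0..norm z} P \<le> norm (F z)"
proof (cases "z = 0")
  case True
  then show ?thesis by simp
next
  case False
  define r where "r = norm z"
  have r: "0 < r" "r < 1" using False assms(2) by (auto simp: r_def)
  have hol: "F holomorphic_on ball 0 1" and inj: "inj_on F (ball 0 1)" and F0: "F 0 = 0"
    using assms(1) by (auto simp: class_S_def)
  have sub: "cball 0 r \<subseteq> ball (0::complex) 1" "sphere 0 r \<subseteq> ball (0::complex) 1" using r by auto
  have contF: "continuous_on (sphere 0 r) (\<lambda>\<zeta>. norm (F \<zeta>))"
    using holomorphic_on_imp_continuous_on[OF holomorphic_on_subset[OF hol sub(2)]]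
    by (intro continuous_intros)
  obtain z0 where z0: "z0 \<in> sphere 0 r" "\<And>\<zeta>. \<zeta> \<in> sphere 0 r \<Longrightarrow> norm (F z0) \<le> norm (F \<zeta>)"
    using continuous_attains_inf[OF compact_sphere _ contF] r by fastforce
  have bal: "ball 0 (norm (F z0)) \<subseteq> F ` ball 0 r"
    by (rule ball_in_image[OF hol inj r F0 z0(2)])
  define k where "k = (\<lambda>\<zeta>. norm (deriv F \<zeta>))"
  have contk: "continuous_on (cball 0 r) k" unfolding k_def
    using holomorphic_on_imp_continuous_on[OF holomorphic_on_subset[OF holomorphic_deriv[OF hol open_ball] sub(1)]]
    by (intro continuous_intros)
  define m where "m = (\<lambda>\<rho>. INF u\<in>sphere 0 1. k (of_real \<rho> * u))"
  have mc: "continuous_on {0..r} m" unfolding m_def by (rule inf_sphere_cont[OF contk])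
  have ne: "sphere (0::complex) 1 \<noteq> {}" by simp
  have m0: "0 \<le> m \<rho>" for \<rho> unfolding m_def
    by (rule cINF_greatest[OF ne]) (simp add: k_def)
  have bdd: "bdd_below ((\<lambda>u. k (of_real \<rho> * u)) ` sphere 0 1)" for \<rho>
    by (rule bdd_belowI[of _ 0]) (auto simp: k_def)
  have mF: "m (norm \<zeta>) \<le> norm (deriv F \<zeta>)" for \<zeta>
  proof -
    define u where "u = (if \<zeta> = 0 then 1 else sgn \<zeta>)"
    have u: "u \<in> sphere 0 1" "of_real (norm \<zeta>) * u = \<zeta>"
      by (auto simp: u_def norm_sgn complex_sgn_def scaleR_conv_of_real field_simps norm_divide)
    show ?thesis unfolding m_def using cINF_lower[OF bdd[of "norm \<zeta>"] u(1)] u(2) by (simp add: k_def)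
  qed
  have Pm: "P \<rho> \<le> m \<rho>" if "\<rho> \<in> {0..r}" for \<rho> unfolding m_def
  proof (rule cINF_greatest[OF ne])
    fix u :: complex assume "u \<in> sphere 0 1"
    then have "of_real \<rho> * u \<in> ball 0 1" "norm (of_real \<rho> * u) = \<rho>" using that r by (auto simp: norm_mult)
    then show "P \<rho> \<le> k (of_real \<rho> * u)" using assms(4) by (metis k_def)
  qed
  have "integral {0..r} P \<le> integral {0..r} m"
    by (rule integral_le[OF assms(3)[folded r_def] integrable_continuous_real[OF mc] Pm])
  also have "\<dots> \<le> norm (F z0)"
    by (rule key_lower[OF hol inj F0 r z0(1) bal mc]) (use m0 mF in auto)
  also have "\<dots> \<le> norm (F z)" using z0(2)[of z] by (simp add: r_def)
  finally show ?thesis by (simp add: r_def)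
qed

lemma deriv_comb:
  assumes "h holomorphic_on ball 0 1" "g holomorphic_on ball 0 1"
    "\<forall>z\<in>ball 0 1. F z = h z + \<epsilon> * g z" "\<zeta> \<in> ball 0 1"
  shows "deriv F \<zeta> = deriv h \<zeta> + \<epsilon> * deriv g \<zeta>"
proof -
  have ev: "eventually (\<lambda>x. x \<in> ball 0 1) (nhds \<zeta>)"
    by (rule eventually_nhds_in_open[OF open_ball assms(4)])
  have "deriv F \<zeta> = deriv (\<lambda>z. h z + \<epsilon> * g z) \<zeta>"
    by (rule deriv_cong_ev) (use ev assms(3) in \<open>auto elim!: eventually_mono\<close>)
  also have "\<dots> = deriv h \<zeta> + \<epsilon> * deriv g \<zeta>"
  proof (rule DERIV_imp_deriv)
    have dh: "(h has_field_derivative deriv h \<zeta>) (at \<zeta>)"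
      by (rule holomorphic_derivI[OF assms(1) open_ball assms(4)])
    have dg: "(g has_field_derivative deriv g \<zeta>) (at \<zeta>)"
      by (rule holomorphic_derivI[OF assms(2) open_ball assms(4)])
    show "((\<lambda>z. h z + \<epsilon> * g z) has_field_derivative deriv h \<zeta> + \<epsilon> * deriv g \<zeta>) (at \<zeta>)"
      using dh dg by (auto intro!: derivative_eq_intros)
  qed
  finally show ?thesis .
qed

lemma hg_facts:
  assumes f: "f \<in> harmonic_analogue G" and GS: "G \<subseteq> class_S"
  obtains h g where "h holomorphic_on ball 0 1" "g holomorphic_on ball 0 1"
     "\<And>z. z\<in>ball 0 1 \<Longrightarrow> f z = h z + cnj (g z)"
     "deriv h 0 = 1"
     "\<exists>\<delta>>0. \<forall>\<zeta>. \<zeta> \<noteq> 0 \<and> norm \<zeta> < \<delta> \<longrightarrow> \<zeta> \<in> ball 0 1 \<and> norm (h \<zeta> / \<zeta> - 1) < 1/2"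
     "\<And>\<zeta>. \<zeta> \<in> ball 0 1 \<Longrightarrow> \<zeta> \<noteq> 0 \<Longrightarrow> norm (g \<zeta>) < norm (h \<zeta>)"
proof -
  obtain h g where hg: "h holomorphic_on ball 0 1" "g holomorphic_on ball 0 1"
     "\<And>z. z\<in>ball 0 1 \<Longrightarrow> f z = h z + cnj (g z)"
     "\<And>\<epsilon>. norm \<epsilon> = 1 \<Longrightarrow> \<exists>F\<in>G. \<forall>z\<in>ball 0 1. F z = h z + \<epsilon> * g z"
    using hA_obtain[OF f] by metis
  have mem: "\<exists>F. F \<in> class_S \<and> (\<forall>z\<in>ball 0 1. F z = h z + \<epsilon> * g z)" if "norm \<epsilon> = 1" for \<epsilon>
    using hg(4)[OF that] GS by blast
  obtain F1 where F1: "F1 \<in> class_S" "\<forall>z\<in>ball 0 1. F1 z = h z + 1 * g z" using mem[of 1] by auto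
  obtain F2 where F2: "F2 \<in> class_S" "\<forall>z\<in>ball 0 1. F2 z = h z + (-1) * g z" using mem[of "-1"] by auto
  have 0: "(0::complex) \<in> ball 0 1" by simp
  have "F1 0 = 0" "F2 0 = 0" "deriv F1 0 = 1" "deriv F2 0 = 1" using F1(1) F2(1) by (auto simp: class_S_def)
  then have e: "h 0 + g 0 = 0" "h 0 - g 0 = 0" "deriv h 0 + deriv g 0 = 1" "deriv h 0 - deriv g 0 = 1"
    using F1(2) F2(2) deriv_comb[OF hg(1,2) F1(2) 0] deriv_comb[OF hg(1,2) F2(2) 0] by auto
  then have h0: "h 0 = 0" "g 0 = 0" and dh0: "deriv h 0 = 1" "deriv g 0 = 0"
    by (auto simp: algebra_simps dest: sym) (metis add_diff_cancel_left' add_right_imp_eq diff_add_cancel mult_2 diff_self e(3) e(4) add.commute)?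
  have lh: "((\<lambda>y. (h y - h 0) / (y - 0)) \<longlongrightarrow> 1) (at 0)"
    using holomorphic_derivI[OF hg(1) open_ball 0] dh0 by (simp add: has_field_derivative_iff)
  have lg: "((\<lambda>y. (g y - g 0) / (y - 0)) \<longlongrightarrow> 0) (at 0)"
    using holomorphic_derivI[OF hg(2) open_ball 0] dh0 by (simp add: has_field_derivative_iff)
  have "eventually (\<lambda>y. dist (h y / y) 1 < 1/2) (at 0)" using tendstoD[OF lh, of "1/2"] h0 by simp
  moreover have "eventually (\<lambda>y. dist (g y / y) 0 < 1/2) (at 0)" using tendstoD[OF lg, of "1/2"] h0 by simp
  ultimately have "eventually (\<lambda>y. dist (h y / y) 1 < 1/2 \<and> dist (g y / y) 0 < 1/2) (at 0)"
    by (rule eventually_conj)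
  then obtain \<delta>0 where \<delta>0: "\<delta>0 > 0"
    "\<And>y. y \<noteq> 0 \<Longrightarrow> dist y 0 < \<delta>0 \<Longrightarrow> dist (h y / y) 1 < 1/2 \<and> dist (g y / y) 0 < 1/2"
    unfolding eventually_at by auto
  define \<delta> where "\<delta> = min \<delta>0 1"
  have \<delta>: "\<delta> > 0" "\<delta> \<le> 1" using \<delta>0 by (auto simp: \<delta>_def)
  have small: "\<zeta> \<in> ball 0 1 \<and> norm (h \<zeta> / \<zeta> - 1) < 1/2 \<and> norm (g \<zeta> / \<zeta>) < 1/2"
    if "\<zeta> \<noteq> 0" "norm \<zeta> < \<delta>" for \<zeta>
    using \<delta>0(2)[of \<zeta>] that by (auto simp: \<delta>_def dist_norm)
  have ltsmall: "norm (g \<zeta>) < norm (h \<zeta>)" if "\<zeta> \<noteq> 0" "norm \<zeta> < \<delta>" for \<zeta>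
  proof -
    have a: "norm (h \<zeta> / \<zeta> - 1) < 1/2" "norm (g \<zeta> / \<zeta>) < 1/2" using small[OF that] by auto
    have "1 - norm (h \<zeta> / \<zeta>) \<le> norm (h \<zeta> / \<zeta> - 1)"
      using norm_triangle_ineq2[of 1 "h \<zeta> / \<zeta>"] by (simp add: norm_minus_commute)
    then have "norm (g \<zeta> / \<zeta>) < norm (h \<zeta> / \<zeta>)" using a by linarith
    then show ?thesis using that(1) by (simp add: norm_divide divide_strict_right_mono_neg field_simps)
  qed
  have neq: "norm (g \<zeta>) \<noteq> norm (h \<zeta>)" if z: "\<zeta> \<in> ball 0 1" "\<zeta> \<noteq> 0" for \<zeta>
  proof
    assume eq: "norm (g \<zeta>) = norm (h \<zeta>)"
    define \<epsilon> where "\<epsilon> = (if g \<zeta> = 0 then 1 else - h \<zeta> / g \<zeta>)"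
    have n: "norm \<epsilon> = 1" using eq by (auto simp: \<epsilon>_def norm_divide)
    have hz: "h \<zeta> + \<epsilon> * g \<zeta> = 0" using eq by (auto simp: \<epsilon>_def)
    obtain F where F: "F \<in> class_S" "\<forall>z\<in>ball 0 1. F z = h z + \<epsilon> * g z" using mem[OF n] by blast
    have "F \<zeta> = F 0" using F(2) z(1) hz F(1) by (simp add: class_S_def)
    moreover have "inj_on F (ball 0 1)" using F(1) by (simp add: class_S_def)
    ultimately have "\<zeta> = 0" using z(1) by (auto dest: inj_onD)
    then show False using z(2) by simp
  qed
  have lt: "norm (g \<zeta>) < norm (h \<zeta>)" if z: "\<zeta> \<in> ball 0 1" "\<zeta> \<noteq> 0" for \<zeta>
  proof (rule ccontr)
    assume "\<not> norm (g \<zeta>) < norm (h \<zeta>)"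
    then have neg: "norm (h \<zeta>) - norm (g \<zeta>) \<le> 0" by simp
    define D where "D = ball (0::complex) 1 - {0}"
    have cD: "connected D" unfolding D_def
      by (rule connected_punctured_convex) (auto simp: aff_dim_open)
    have contD: "continuous_on D (\<lambda>z. norm (h z) - norm (g z))"
      using holomorphic_on_imp_continuous_on[OF hg(1)] holomorphic_on_imp_continuous_on[OF hg(2)]
      unfolding D_def by (intro continuous_intros) (auto elim: continuous_on_subset)
    have cI: "connected ((\<lambda>z. norm (h z) - norm (g z)) ` D)"
      by (rule connected_continuous_image[OF contD cD])
    define z2 where "z2 = (of_real (\<delta>/2) :: complex)"
    have z2: "z2 \<noteq> 0" "norm z2 < \<delta>" "z2 \<in> D" using \<delta> by (auto simp: z2_def D_def)
    have pos: "0 \<le> norm (h z2) - norm (g z2)" using ltsmall[OF z2(1,2)] by simp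
    obtain y where y: "y \<in> (\<lambda>z. norm (h z) - norm (g z)) ` D" "inner 1 y = (0::real)"
      using connected_ivt_hyperplane[OF cI, of "norm (h \<zeta>) - norm (g \<zeta>)" "norm (h z2) - norm (g z2)" 1 0]
        neg pos z z2(3) unfolding D_def by auto
    then obtain z3 where "z3 \<in> D" "norm (h z3) - norm (g z3) = 0" by auto
    then show False using neq[of z3] unfolding D_def by auto
  qed
  show ?thesis
  proof (rule that[OF hg(1,2,3) dh0(1) _ lt])
    show "\<exists>\<delta>>0. \<forall>\<zeta>. \<zeta> \<noteq> 0 \<and> norm \<zeta> < \<delta> \<longrightarrow> \<zeta> \<in> ball 0 1 \<and> norm (h \<zeta> / \<zeta> - 1) < 1/2"
      using small \<delta> by blast
  qed auto
qed

lemma surj_lemma: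
  assumes "f \<in> harmonic_analogue G" "G \<subseteq> class_S" "0 < r" "r < 1"
    "\<And>\<zeta>. \<zeta> \<in> sphere 0 r \<Longrightarrow> norm w < norm (f \<zeta>)"
  shows "w \<in> f ` ball 0 1"
proof (rule ccontr)
  assume nw: "w \<notin> f ` ball 0 1"
  obtain h g where hg: "h holomorphic_on ball 0 1" "g holomorphic_on ball 0 1"
     "\<And>z. z\<in>ball 0 1 \<Longrightarrow> f z = h z + cnj (g z)"
     "deriv h 0 = 1"
     "\<exists>\<delta>>0. \<forall>\<zeta>. \<zeta> \<noteq> 0 \<and> norm \<zeta> < \<delta> \<longrightarrow> \<zeta> \<in> ball 0 1 \<and> norm (h \<zeta> / \<zeta> - 1) < 1/2"
     "\<And>\<zeta>. \<zeta> \<in> ball 0 1 \<Longrightarrow> \<zeta> \<noteq> 0 \<Longrightarrow> norm (g \<zeta>) < norm (h \<zeta>)"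
    using hg_facts[OF assms(1,2)] by metis
  obtain \<delta> where \<delta>: "\<delta> > 0" "\<And>\<zeta>. \<zeta> \<noteq> 0 \<Longrightarrow> norm \<zeta> < \<delta> \<Longrightarrow> \<zeta> \<in> ball 0 1 \<and> norm (h \<zeta> / \<zeta> - 1) < 1/2"
    using hg(5) by blast
  define S where "S = sphere (0::complex) r"
  define T where "T = - {0::complex}"
  define fh where "fh = (\<lambda>\<zeta>. h \<zeta> + cnj (g \<zeta>))"
  have subS: "S \<subseteq> ball 0 1" "cball 0 r \<subseteq> ball (0::complex) 1" using assms(3,4) by (auto simp: S_def)
  have contH: "continuous_on (ball 0 1) h" "continuous_on (ball 0 1) g"
    using holomorphic_on_imp_continuous_on hg(1,2) by auto
  have contfh: "continuous_on (ball 0 1) fh" unfolding fh_def using contH by (intro continuous_intros)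
  have Sne0: "\<zeta> \<noteq> 0" "norm \<zeta> = r" if "\<zeta> \<in> S" for \<zeta> using that assms(3) by (auto simp: S_def)
  have fhS: "norm w < norm (fh \<zeta>)" if "\<zeta> \<in> S" for \<zeta>
    using assms(5)[of \<zeta>] hg(3)[of \<zeta>] that subS by (auto simp: S_def fh_def)
  have H1: "homotopic_with_canon (\<lambda>x. True) S T (\<lambda>\<zeta>. fh \<zeta> - w) fh"
  proof (rule homotopic_with_linear)
    show "continuous_on S (\<lambda>\<zeta>. fh \<zeta> - w)" "continuous_on S fh"
      using continuous_on_subset[OF contfh subS(1)] by (auto intro!: continuous_intros)
    fix \<zeta> assume z: "\<zeta> \<in> S"
    show "closed_segment (fh \<zeta> - w) (fh \<zeta>) \<subseteq> T"
    proof
      fix p assume "p \<in> closed_segment (fh \<zeta> - w) (fh \<zeta>)"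
      then have "norm (p - fh \<zeta>) \<le> norm w" using segment_bound(2) by fastforce
      then have "p \<noteq> 0" using fhS[OF z] by auto
      then show "p \<in> T" by (simp add: T_def)
    qed
  qed
  have H2: "homotopic_with_canon (\<lambda>x. True) S T fh h"
  proof (rule homotopic_with_linear)
    show "continuous_on S fh" "continuous_on S h"
      using continuous_on_subset[OF contfh subS(1)] continuous_on_subset[OF contH(1) subS(1)] by auto
    fix \<zeta> assume z: "\<zeta> \<in> S"
    show "closed_segment (fh \<zeta>) (h \<zeta>) \<subseteq> T"
    proof
      fix p assume "p \<in> closed_segment (fh \<zeta>) (h \<zeta>)"
      then have "norm (p - h \<zeta>) \<le> norm (g \<zeta>)" using segment_bound(2) by (fastforce simp: fh_def)
      then have "p \<noteq> 0" using hg(6)[of \<zeta>] subS z Sne0[OF z] by auto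
      then show "p \<in> T" by (simp add: T_def)
    qed
  qed
  define s0 where "s0 = min 1 (\<delta> / (2 * r))"
  have s0: "0 < s0" "s0 \<le> 1" "s0 * r < \<delta>"
    using \<delta>(1) assms(3) by (auto simp: s0_def min_def field_simps)
  have s0r: "s0 * r < 1"
  proof -
    have "s0 * r \<le> 1 * r" using s0(2) assms(3) by (intro mult_right_mono) auto
    then show ?thesis using assms(4) by simp
  qed
  define hs where "hs = (\<lambda>\<zeta>. h (of_real s0 * \<zeta>) / of_real s0)"
  have hnz: "h \<zeta> \<noteq> 0" if "\<zeta> \<in> ball 0 1" "\<zeta> \<noteq> 0" for \<zeta>
    using hg(6)[OF that] by auto
  have H3: "homotopic_with_canon (\<lambda>x. True) S T h hs"
  proof -
    define c where "c = (\<lambda>t::real. 1 - t * (1 - s0))"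
    have c: "s0 \<le> c t" "c t \<le> 1" "0 < c t" if "t \<in> {0..1}" for t
    proof -
      have "t * (1 - s0) \<le> 1 * (1 - s0)" using that s0 by (intro mult_right_mono) auto
      then show "s0 \<le> c t" by (simp add: c_def)
      show "c t \<le> 1" using that s0 by (simp add: c_def)
      then show "0 < c t" using s0 \<open>s0 \<le> c t\<close> by linarith
    qed
    define K where "K = (\<lambda>x::real \<times> complex. h (of_real (c (fst x)) * snd x) / of_real (c (fst x)))"
    have inb: "of_real (c t) * \<zeta> \<in> ball 0 1" "of_real (c t) * \<zeta> \<noteq> 0"
      if "t \<in> {0..1}" "\<zeta> \<in> S" for t \<zeta>
    proof -
      have "c t * r \<le> 1 * r" using c[OF that(1)] assms(3) by (intro mult_right_mono) auto
      then show "of_real (c t) * \<zeta> \<in> ball 0 1"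
        using Sne0[OF that(2)] c[OF that(1)] assms(4) by (simp add: norm_mult)
      show "of_real (c t) * \<zeta> \<noteq> 0" using Sne0[OF that(2)] c[OF that(1)] by simp
    qed
    have contK: "continuous_on ({0..1} \<times> S) K"
    proof -
      have "continuous_on ({0..1} \<times> S) (\<lambda>x. h (of_real (c (fst x)) * snd x))"
        by (rule continuous_on_compose2[OF contH(1)])
           (use inb in \<open>auto intro!: continuous_intros simp: c_def\<close>)
      moreover have "continuous_on ({0..1} \<times> S) (\<lambda>x::real\<times>complex. (of_real (c (fst x)) :: complex))"
        unfolding c_def by (intro continuous_intros)
      moreover have "\<forall>x\<in>{0..1} \<times> S. (of_real (c (fst x)) :: complex) \<noteq> 0"
        using c by fastforce
      ultimately show ?thesis unfolding K_def by (rule continuous_on_divide)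
    qed
    have Kim: "K ` ({0..1} \<times> S) \<subseteq> T"
    proof
      fix y assume "y \<in> K ` ({0..1} \<times> S)"
      then obtain t \<zeta> where tz: "t \<in> {0..1}" "\<zeta> \<in> S" "y = K (t, \<zeta>)" by auto
      then show "y \<in> T" using hnz[OF inb[OF tz(1,2)]] c[OF tz(1)] by (simp add: K_def T_def)
    qed
    have K0: "K (0, \<zeta>) = h \<zeta>" and K1: "K (1, \<zeta>) = hs \<zeta>" for \<zeta>
      by (simp_all add: K_def c_def hs_def)
    show ?thesis
      using contK Kim K0 K1 unfolding homotopic_with_def
      by (intro exI[of _ K]) (auto simp: image_subset_iff_funcset)
  qed
  have H4: "homotopic_with_canon (\<lambda>x. True) S T hs id"
  proof (rule homotopic_with_linear)
    have "continuous_on S (\<lambda>\<zeta>. h (of_real s0 * \<zeta>))"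
      by (rule continuous_on_compose2[OF contH(1)]) (use subS s0 s0r in \<open>auto intro!: continuous_intros simp: S_def norm_mult\<close>)
    then show "continuous_on S hs" unfolding hs_def by (intro continuous_intros) (use s0 in auto)
    show "continuous_on S id" by (simp add: continuous_on_id)
    fix \<zeta> assume z: "\<zeta> \<in> S"
    have sz: "of_real s0 * \<zeta> \<noteq> 0" "norm (of_real s0 * \<zeta>) < \<delta>"
      using Sne0[OF z] s0 by (auto simp: norm_mult)
    have b: "norm (h (of_real s0 * \<zeta>) / (of_real s0 * \<zeta>) - 1) < 1/2" using \<delta>(2)[OF sz] by blast
    have "hs \<zeta> - \<zeta> = \<zeta> * (h (of_real s0 * \<zeta>) / (of_real s0 * \<zeta>) - 1)"
      using Sne0[OF z] s0 by (simp add: hs_def field_simps)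
    then have dz: "norm (hs \<zeta> - \<zeta>) < r / 2"
      using b Sne0[OF z] assms(3) by (simp add: norm_mult)
    show "closed_segment (hs \<zeta>) (id \<zeta>) \<subseteq> T"
    proof
      fix p assume "p \<in> closed_segment (hs \<zeta>) (id \<zeta>)"
      then have "norm (p - \<zeta>) \<le> norm (\<zeta> - hs \<zeta>)" using segment_bound(2) by fastforce
      then have "norm (p - \<zeta>) < r / 2" using dz by (simp add: norm_minus_commute)
      then have "p \<noteq> 0" using Sne0[OF z] assms(3) by auto
      then show "p \<in> T" by (simp add: T_def)
    qed
  qed
  have Hid: "homotopic_with_canon (\<lambda>x. True) S T id (\<lambda>\<zeta>. fh \<zeta> - w)"
  proof -
    have "homotopic_with_canon (\<lambda>x. True) S T id hs" using homotopic_with_symD[OF H4] .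
    then have "homotopic_with_canon (\<lambda>x. True) S T id h" using homotopic_with_trans homotopic_with_symD[OF H3] by blast
    then have "homotopic_with_canon (\<lambda>x. True) S T id fh" using homotopic_with_trans homotopic_with_symD[OF H2] by blast
    then show ?thesis using homotopic_with_trans homotopic_with_symD[OF H1] by blast
  qed
  have "\<exists>c. homotopic_with_canon (\<lambda>x. True) S T (\<lambda>\<zeta>. fh \<zeta> - w) (\<lambda>x. c)"
    unfolding S_def
  proof (rule nullhomotopic_from_sphere_extension[THEN iffD2])
    show "\<exists>g'. continuous_on (cball 0 r) g' \<and> g' ` cball 0 r \<subseteq> T \<and> (\<forall>x\<in>sphere 0 r. g' x = fh x - w)"
    proof (intro exI conjI ballI)
      show "continuous_on (cball 0 r) (\<lambda>\<zeta>. fh \<zeta> - w)"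
        using continuous_on_subset[OF contfh subS(2)] by (auto intro!: continuous_intros)
      show "(\<lambda>\<zeta>. fh \<zeta> - w) ` cball 0 r \<subseteq> T"
      proof
        fix y assume "y \<in> (\<lambda>\<zeta>. fh \<zeta> - w) ` cball 0 r"
        then obtain \<zeta> where z: "\<zeta> \<in> cball 0 r" "y = fh \<zeta> - w" by blast
        then have "\<zeta> \<in> ball 0 1" using subS by auto
        then have "fh \<zeta> \<noteq> w" using nw hg(3) by (force simp: fh_def)
        then show "y \<in> T" using z by (simp add: T_def)
      qed
    qed simp
  qed
  then obtain c where c: "homotopic_with_canon (\<lambda>x. True) S T (\<lambda>\<zeta>. fh \<zeta> - w) (\<lambda>x. c)" by blast
  have Hc: "homotopic_with_canon (\<lambda>x. True) S T id (\<lambda>x. c)"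
    using homotopic_with_trans[OF Hid c] .
  define \<rho> where "\<rho> = (\<lambda>x::complex. of_real (r / norm x) * x)"
  have cont\<rho>: "continuous_on T \<rho>" unfolding \<rho>_def T_def by (intro continuous_intros) auto
  have \<rho>im: "\<rho> \<in> T \<rightarrow> S" using assms(3) by (auto simp: \<rho>_def T_def S_def norm_mult norm_divide)
  have "homotopic_with_canon (\<lambda>x. True) S S (\<rho> \<circ> id) (\<rho> \<circ> (\<lambda>x. c))"
    by (rule homotopic_with_compose_continuous_left[OF _ cont\<rho> \<rho>im]) (use Hc in simp)
  then have "homotopic_with_canon (\<lambda>x. True) S S id (\<lambda>x. \<rho> c)"
    by (rule homotopic_with_eq) (auto simp: \<rho>_def S_def)
  then have "contractible S" unfolding contractible_def by blast
  then show False using contractible_sphere[of "0::complex" r] assms(3) by (simp add: S_def)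
qed

theorem theorem2p6:
  fixes G :: "(complex \<Rightarrow> complex) set" and P Q :: "real \<Rightarrow> real"
  assumes "G \<subseteq> class_S"
    and "\<And>r. 0 \<le> r \<Longrightarrow> r < 1 \<Longrightarrow> P integrable_on {0..r}"
    and "\<And>r. 0 \<le> r \<Longrightarrow> r < 1 \<Longrightarrow> Q integrable_on {0..r}"
    and "\<And>f z. f \<in> G \<Longrightarrow> z \<in> ball 0 1 \<Longrightarrow>
           P (norm z) \<le> norm (deriv f z) \<and> norm (deriv f z) \<le> Q (norm z)"
  shows "(\<forall>f\<in>harmonic_analogue G. \<forall>z\<in>ball 0 1.
            integral {0..norm z} P \<le> norm (f z) \<and> norm (f z) \<le> integral {0..norm z} Q)
       \<and> (\<forall>L. ((\<lambda>r. integral {0..r} P) \<longlongrightarrow> L) (at_left 1) \<longrightarrow>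
            (\<forall>f\<in>harmonic_analogue G. ball 0 L \<subseteq> f ` ball 0 1))
       \<and> (filterlim (\<lambda>r. integral {0..r} P) at_top (at_left 1) \<longrightarrow>
            (\<forall>f\<in>harmonic_analogue G. f ` ball 0 1 = UNIV))"
proof -
  have part1: "integral {0..norm z} P \<le> norm (f z) \<and> norm (f z) \<le> integral {0..norm z} Q"
    if f: "f \<in> harmonic_analogue G" and z: "z \<in> ball 0 1" for f z
  proof -
    obtain F where F: "F \<in> G" "f z = F z" using pointwise_member[OF f z] by blast
    have S: "F \<in> class_S" using F assms(1) by blast
    have nz: "0 \<le> norm z" "norm z < 1" using z by auto
    have "integral {0..norm z} P \<le> norm (F z)"
      by (rule lower_analytic[OF S z assms(2)[OF nz]]) (use assms(4) F in blast)
    moreover have "norm (F z) \<le> integral {0..norm z} Q"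
      by (rule upper_analytic[OF _ _ z assms(3)[OF nz]])
         (use S assms(4) F in \<open>auto simp: class_S_def\<close>)
    ultimately show ?thesis using F by simp
  qed
  have key: "w \<in> f ` ball 0 1"
    if f: "f \<in> harmonic_analogue G" and ev: "eventually (\<lambda>r. integral {0..r} P > norm w) (at_left 1)"
    for f w
  proof -
    obtain b where b: "b < 1" "\<And>y. b < y \<Longrightarrow> y < 1 \<Longrightarrow> integral {0..y} P > norm w"
      using ev unfolding eventually_at_left_field by auto
    define r where "r = (max b 0 + 1) / 2"
    have r: "0 < r" "r < 1" "b < r" using b(1) by (auto simp: r_def)
    show ?thesis
    proof (rule surj_lemma[OF f assms(1) r(1,2)])
      fix \<zeta> :: complex assume "\<zeta> \<in> sphere 0 r"
      then have "norm \<zeta> = r" "\<zeta> \<in> ball 0 1" using r by auto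
      then have "integral {0..r} P \<le> norm (f \<zeta>)" using part1[OF f] by metis
      then show "norm w < norm (f \<zeta>)" using b(2)[OF r(3) r(2)] by linarith
    qed
  qed
  show ?thesis
  proof (intro conjI allI impI ballI)
    fix f z assume "f \<in> harmonic_analogue G" "z \<in> ball (0::complex) 1"
    then show "integral {0..norm z} P \<le> norm (f z)" "norm (f z) \<le> integral {0..norm z} Q"
      using part1 by auto
  next
    fix L f assume L: "((\<lambda>r. integral {0..r} P) \<longlongrightarrow> L) (at_left 1)" and f: "f \<in> harmonic_analogue G"
    show "ball 0 L \<subseteq> f ` ball 0 1"
    proof
      fix w :: complex assume "w \<in> ball 0 L"
      then have "norm w < L" by simp
      then show "w \<in> f ` ball 0 1" using key[OF f] order_tendstoD(1)[OF L] by blast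
    qed
  next
    fix f assume L: "filterlim (\<lambda>r. integral {0..r} P) at_top (at_left 1)" and f: "f \<in> harmonic_analogue G"
    show "f ` ball 0 1 = UNIV"
    proof (rule set_eqI, rule iffI)
      fix w :: complex
      have "eventually (\<lambda>r. integral {0..r} P > norm w) (at_left 1)"
        using L unfolding filterlim_at_top_dense by blast
      then show "w \<in> f ` ball 0 1"
        using key[OF f] by blast
    qed simp
  qed
qed

end
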